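(* Let $\beta\in(0,1)$, $x^1\ge0$, $C:\mathbb{R}_+\to\mathbb{R}_+$ increasing, strictly convex and continuously differentiable with $c=C'$, $\lim_{x\to\infty}c(x)=\infty$. Let $\mathbb{P}$ be a probability distribution with nonnegative support, finite mean, and no atoms, and $\boldsymbol{p},\boldsymbol{p}^1,\boldsymbol{p}^2,\ldots$ i.i.d. with law $\mathbb{P}$. Fix samples $p_1,\ldots,p_N$ and define $y_{\mathrm{S}},y_{\mathrm{M}},\bar V_{\mathrm{S}},\bar V_{\mathrm{M}},p^\star_{\mathrm{S}},p^\star_{\mathrm{M}}$ as in the context. Then $$\frac{d\bar V_{\mathrm{S}}(x)}{dx}=\frac{\mathbb{E}_{\mathbb{P}}[\boldsymbol{p}\mathbb{1}\{\boldsymbol{p}>p^\star_{\mathrm{S}}(x)\}]-\mathbb{E}_{\mathbb{P}}[\mathbb{1}\{\boldsymbol{p}\le p^\star_{\mathrm{S}}(x)\}]c(x)}{1-\beta\mathbb{E}_{\mathbb{P}}[\mathbb{1}\{\boldsymbol{p}\le p^\star_{\mathrm{S}}(x)\}]}$$ and $$\frac{d\bar V_{\mathrm{M}}(x)}{dx}=\frac{\mathbb{E}_{\mathbb{P}}[\boldsymbol{p}\mathbb{1}\{\boldsymbol{p}>p^\star_{\mathrm{M}}(x)\}]-\mathbb{E}_{\mathbb{P}}[\mathbb{1}\{\boldsymbol{p}\le p^\star_{\mathrm{M}}(x)\}]c(x)}{1-\beta\mathbb{E}_{\mathbb{P}}[\mathbb{1}\{\boldsymbol{p}\le p^\star_{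\mathrm{M}}(x)\}]}.$$
   Context: $c^{-1}$ is the inverse of $c$ on its range, $(z)_{[a,b]}$ the projection onto $[a,b]$, $(z)_+=\max\{z,0\}$, $\mathbb{1}$ the event indicator, $\mu_N=\frac1N\sum_i p_i$. $y_{\mathrm{S}}(x,p)=c^{-1}((\beta\frac1N\sum_{i=1}^N(p_i-p)_+-(1-\beta)p)_{[c(0),c(x)]})$, $y_{\mathrm{M}}(x,p)=c^{-1}((\beta(\mu_N-p)_+-(1-\beta)p)_{[c(0),c(x)]})$. For a policy $y$, $y(\infty,p)=\lim_{x\to\infty}y(x,p)$, and $p^\star(x)$ is the highest price $p$ solving $y(\infty,p)=x$ ($p^\star_{\mathrm{S}},p^\star_{\mathrm{M}}$ for $y_{\mathrm{S}},y_{\mathrm{M}}$). $\bar V_y(x)=\mathbb{E}_{\mathbb{P}^\infty}[\sum_{t=1}^\infty\beta^{t-1}(\boldsymbol{p}^t(x^t-x^{t+1})-C(x^{t+1}))]$ with $x^1=x$, $x^{t+1}=y(x^t,\boldsymbol{p}^t)$; $\bar V_{\mathrm{S}}=\bar V_{y_{\mathrm{S}}}$, $\bar V_{\mathrm{M}}=\bar V_{y_{\mathrm{M}}}$, on $x\in[0,x^1]$. *)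

theory Defs
  imports "HOL-Probability.Probability"
begin

definition strict_convex_on :: "real set \<Rightarrow> (real \<Rightarrow> real) \<Rightarrow> bool" where
  "strict_convex_on S f \<longleftrightarrow> (\<forall>x\<in>S. \<forall>y\<in>S. \<forall>t. x \<noteq> y \<and> 0 < t \<and> t < 1 \<longrightarrow>
      f ((1 - t) * x + t * y) < (1 - t) * f x + t * f y)"

definition proj :: "real \<Rightarrow> real \<Rightarrow> real \<Rightarrow> real" where
  "proj a b z = max a (min b z)"

definition cinv :: "(real \<Rightarrow> real) \<Rightarrow> real \<Rightarrow> real" where
  "cinv c z = inv_into {0..} c z"

definition yS :: "(real \<Rightarrow> real) \<Rightarrow> real \<Rightarrow> nat \<Rightarrow> (nat \<Rightarrow> real) \<Rightarrow> real \<Rightarrow> real \<Rightarrow> real" where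
  "yS c \<beta> N ps x p = cinv c (proj (c 0) (c x)
      (\<beta> * ((1 / real N) * (\<Sum>i=1..N. max (ps i - p) 0)) - (1 - \<beta>) * p))"

definition muN :: "nat \<Rightarrow> (nat \<Rightarrow> real) \<Rightarrow> real" where
  "muN N ps = (1 / real N) * (\<Sum>i=1..N. ps i)"

definition yM :: "(real \<Rightarrow> real) \<Rightarrow> real \<Rightarrow> nat \<Rightarrow> (nat \<Rightarrow> real) \<Rightarrow> real \<Rightarrow> real \<Rightarrow> real" where
  "yM c \<beta> N ps x p = cinv c (proj (c 0) (c x)
      (\<beta> * max (muN N ps - p) 0 - (1 - \<beta>) * p))"

definition y_inf :: "(real \<Rightarrow> real \<Rightarrow> real) \<Rightarrow> real \<Rightarrow> real" where
  "y_inf y p = Lim at_top (\<lambda>x. y x p)"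

definition pstar :: "(real \<Rightarrow> real \<Rightarrow> real) \<Rightarrow> real \<Rightarrow> real" where
  "pstar y x = (GREATEST p. y_inf y p = x)"

text \<open>Inventory trajectory: traj 0 = x^1 (= x), traj (t+1) = y(traj t, price at period t).
  Periods are indexed from 0 here (period t+1 of the paper).\<close>
primrec traj :: "(real \<Rightarrow> real \<Rightarrow> real) \<Rightarrow> real \<Rightarrow> (nat \<Rightarrow> real) \<Rightarrow> nat \<Rightarrow> real" where
  "traj y x \<omega> 0 = x"
| "traj y x \<omega> (Suc t) = y (traj y x \<omega> t) (\<omega> t)"

definition Vbar :: "(real \<Rightarrow> real \<Rightarrow> real) \<Rightarrow> real measure \<Rightarrow> (real \<Rightarrow> real) \<Rightarrow> real \<Rightarrow> real \<Rightarrow> real" where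
  "Vbar y M C \<beta> x = (\<integral>\<omega>. (\<Sum>t. \<beta> ^ t * (\<omega> t * (traj y x \<omega> t - traj y x \<omega> (Suc t))
        - C (traj y x \<omega> (Suc t)))) \<partial>(PiM (UNIV :: nat set) (\<lambda>_. M)))"

end

theory Submission
  imports Defs
begin

lemma strict_convex_imp_convex:
  assumes "strict_convex_on {0..} C"
  shows "convex_on {0..} C"
proof (rule convex_onI)
  fix t x y :: real assume t: "t > 0" "t < 1" and xy: "x \<in> {0..}" "y \<in> {0..}"
  show "C ((1 - t) *\<^sub>R x + t *\<^sub>R y) \<le> (1 - t) * C x + t * C y"
  proof (cases "x = y")
    case True then show ?thesis by (simp add: algebra_simps)
  next
    case False then show ?thesis using assms t xy unfolding strict_convex_on_def by force
  qed
qed (simp add: convex_real_interval)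

lemma c_strict:
  fixes C c :: "real \<Rightarrow> real"
  assumes sc: "strict_convex_on {0..} C"
    and C_deriv: "\<forall>x\<ge>0. (C has_real_derivative c x) (at x within {0..})"
    and ab: "0 < a" "a < b"
  shows "c a < c b"
proof -
  have cv: "convex_on {0..} C" by (rule strict_convex_imp_convex[OF sc])
  have int: "interior {0::real..} = {0<..}" by simp
  have tan: "C z - C u \<ge> c u * (z - u)" if "u > 0" "z \<ge> 0" for u z
    using convex_on_imp_above_tangent[OF cv, of u z "c u"] that C_deriv
    by (auto simp: int)
  define m where "m = (a + b) / 2"
  have H: "\<And>x y t. x \<ge> 0 \<Longrightarrow> y \<ge> 0 \<Longrightarrow> x \<noteq> y \<Longrightarrow> 0 < t \<Longrightarrow> t < 1 \<Longrightarrow>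
      C ((1 - t) * x + t * y) < (1 - t) * C x + t * C y"
    using sc unfolding strict_convex_on_def by auto
  have "C ((1 - 1/2) * a + (1/2) * b) < (1 - 1/2) * C a + (1/2) * C b"
    using H[of a b "1/2"] ab by simp
  moreover have "(1 - 1/2) * a + (1/2) * b = m" by (simp add: m_def)
  ultimately have m: "C m < (C a + C b) / 2" by simp
  have 1: "C m - C a \<ge> c a * (m - a)" using tan[of a m] ab by (simp add: m_def)
  have 2: "C a - C b \<ge> c b * (a - b)" using tan[of b a] ab by simp
  define k where "k = c a * (b - a)"
  have e: "c a * (m - a) = k / 2" by (simp add: m_def k_def field_simps)
  from m 1 e have "k < C b - C a" by (simp add: field_simps)
  hence "c a * (b - a) < C b - C a" by (simp add: k_def)
  with 2 have "c a * (b - a) < c b * (b - a)" by (simp add: algebra_simps)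
  thus ?thesis using ab by simp
qed


locale mdl =
  fixes C c :: "real \<Rightarrow> real" and M :: "real measure" and \<beta> :: real and g :: "real \<Rightarrow> real"
  assumes beta: "0 < \<beta>" "\<beta> < 1"
  and C_mono: "mono_on {0..} C"
  and C_deriv: "\<forall>x\<ge>0. (C has_real_derivative c x) (at x within {0..})"
  and c_strict: "\<And>a b. 0 \<le> a \<Longrightarrow> a < b \<Longrightarrow> c a < c b"
  and c_cont: "continuous_on {0..} c"
  and c_lim: "filterlim c at_top at_top"
  and M_prob: "prob_space M" and M_borel: "sets M = sets borel"
  and M_mean: "integrable M (\<lambda>p. p)" and M_no_atoms: "\<forall>a. measure M {a} = 0"
  and g_cont: "continuous_on UNIV g"
  and g_strict: "\<And>a b. a < b \<Longrightarrow> g b < g a"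
  and g_low: "\<And>z. \<exists>p. g p \<le> z" and g_high: "\<And>z. \<exists>p. z \<le> g p"
begin

definition Y :: "real \<Rightarrow> real" where "Y p = cinv c (max (c 0) (g p))"
definition y :: "real \<Rightarrow> real \<Rightarrow> real" where "y x p = cinv c (proj (c 0) (c x) (g p))"

lemma c_mono: "0 \<le> a \<Longrightarrow> a \<le> b \<Longrightarrow> c a \<le> c b"
  using c_strict[of a b] by (cases "a = b") auto

lemma c_less_iff: "0 \<le> a \<Longrightarrow> 0 \<le> b \<Longrightarrow> c a < c b \<longleftrightarrow> a < b"
  using c_strict[of a b] c_strict[of b a] by (cases a b rule: linorder_cases) auto

lemma c_le_iff: "0 \<le> a \<Longrightarrow> 0 \<le> b \<Longrightarrow> c a \<le> c b \<longleftrightarrow> a \<le> b"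
  using c_less_iff[of b a] by auto

lemma c_inj: "inj_on c {0..}"
proof (rule inj_onI)
  fix a b assume "a \<in> {0..}" "b \<in> {0..}" "c a = c b"
  thus "a = b" using c_strict[of a b] c_strict[of b a] by (cases a b rule: linorder_cases) auto
qed

lemma c_range: assumes "c 0 \<le> z" shows "z \<in> c ` {0..}"
proof -
  from c_lim have "eventually (\<lambda>x. z \<le> c x) at_top" by (simp add: filterlim_at_top)
  then obtain b0 where b0: "\<And>x. x \<ge> b0 \<Longrightarrow> z \<le> c x" by (auto simp: eventually_at_top_linorder)
  define b where "b = max b0 0"
  have "z \<le> c b" using b0 by (simp add: b_def)
  moreover have "continuous_on {0..b} c" using c_cont by (rule continuous_on_subset) auto
  ultimately obtain u where "0 \<le> u" "u \<le> b" "c u = z"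
    using IVT'[of c 0 z b] assms by (auto simp: b_def)
  thus ?thesis by auto
qed

lemma cinv_c [simp]: "0 \<le> u \<Longrightarrow> cinv c (c u) = u"
  unfolding cinv_def using c_inj by simp

lemma c_cinv: "c 0 \<le> z \<Longrightarrow> c (cinv c z) = z"
  unfolding cinv_def using c_range by (simp add: f_inv_into_f)

lemma cinv_nonneg: "c 0 \<le> z \<Longrightarrow> 0 \<le> cinv c z"
  unfolding cinv_def using inv_into_into[OF c_range[of z]] by simp

lemma cinv_less_iff: "c 0 \<le> z \<Longrightarrow> 0 \<le> u \<Longrightarrow> cinv c z < u \<longleftrightarrow> z < c u"
  using c_less_iff[OF cinv_nonneg, of z u] c_cinv[of z] by simp

lemma cinv_le_iff: "c 0 \<le> z \<Longrightarrow> 0 \<le> u \<Longrightarrow> cinv c z \<le> u \<longleftrightarrow> z \<le> c u"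
  using c_le_iff[OF cinv_nonneg, of z u] c_cinv[of z] by simp

lemma cinv_mono: "c 0 \<le> z \<Longrightarrow> z \<le> z' \<Longrightarrow> cinv c z \<le> cinv c z'"
  using cinv_le_iff[of z "cinv c z'"] c_cinv[of z'] cinv_nonneg[of z'] by simp

lemma Y_nonneg: "0 \<le> Y p"
  unfolding Y_def by (rule cinv_nonneg) simp

lemma g_anti: "a \<le> b \<Longrightarrow> g b \<le> g a"
  using g_strict[of a b] by (cases "a = b") auto

lemma Y_anti: "a \<le> b \<Longrightarrow> Y b \<le> Y a"
  unfolding Y_def using g_anti[of a b] by (intro cinv_mono) (auto simp: max_def)

lemma y_eq: assumes "0 \<le> x" shows "y x p = min x (Y p)"
proof -
  have cx: "c 0 \<le> c x" using c_mono assms by simp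
  show ?thesis
  proof (cases "g p \<le> c x")
    case True
    hence "proj (c 0) (c x) (g p) = max (c 0) (g p)" using cx by (simp add: proj_def)
    moreover have "Y p \<le> x" unfolding Y_def using True cx assms by (simp add: cinv_le_iff)
    ultimately show ?thesis by (simp add: y_def Y_def)
  next
    case False
    hence "proj (c 0) (c x) (g p) = c x" using cx by (simp add: proj_def)
    moreover have "x \<le> Y p" unfolding Y_def using False cx assms
      cinv_less_iff[of "max (c 0) (g p)" x] by simp
    ultimately show ?thesis using assms by (simp add: y_def Y_def min_def)
  qed
qed

lemma Y_gt_iff: assumes "0 < x" shows "x < Y p \<longleftrightarrow> c x < g p"
proof -
  have "c 0 < c x" using c_strict assms by simp
  thus ?thesis unfolding Y_def using cinv_le_iff[of "max (c 0) (g p)" x] assms by auto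
qed

lemma Y_eq_iff: assumes "0 < x" shows "Y p = x \<longleftrightarrow> g p = c x"
proof -
  have cx: "c 0 < c x" using c_strict assms by simp
  have "Y p = x \<longleftrightarrow> max (c 0) (g p) = c x"
  proof
    assume "Y p = x" thus "max (c 0) (g p) = c x" unfolding Y_def using c_cinv[of "max (c 0) (g p)"] by auto
  next
    assume "max (c 0) (g p) = c x" thus "Y p = x" unfolding Y_def using assms by simp
  qed
  thus ?thesis using cx by auto
qed

lemma y_inf: "y_inf y p = Y p"
proof -
  from c_lim have "eventually (\<lambda>x. max (c 0) (g p) \<le> c x) at_top" unfolding filterlim_at_top by blast
  moreover have "eventually (\<lambda>x::real. 0 \<le> x) at_top" by (rule eventually_ge_at_top)
  ultimately have "eventually (\<lambda>x. y x p = Y p) at_top"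
  proof eventually_elim
    case (elim x) hence "max (c 0) (min (c x) (g p)) = max (c 0) (g p)" by (simp add: min_def)
    thus ?case unfolding y_def Y_def proj_def by simp
  qed
  hence "((\<lambda>x. y x p) \<longlongrightarrow> Y p) at_top" by (rule tendsto_eventually)
  thus ?thesis unfolding y_inf_def by (rule tendsto_Lim[rotated]) simp
qed

lemma exists_a: "\<exists>a. g a = z"
proof -
  obtain p1 where p1: "g p1 \<le> z" using g_low by blast
  obtain p2 where p2: "z \<le> g p2" using g_high by blast
  have "p2 \<le> p1"
  proof (rule ccontr)
    assume "\<not> p2 \<le> p1" thus False using g_strict[of p1 p2] p1 p2 by simp
  qed
  moreover have "continuous_on {p2..p1} g" by (rule continuous_on_subset[OF g_cont]) simp
  ultimately obtain a where "g a = z" using IVT2'[of g p1 z p2] p1 p2 by blast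
  thus ?thesis by blast
qed

definition astar :: "real \<Rightarrow> real" where "astar x = (THE a. g a = c x)"

lemma astar: "g (astar x) = c x"
proof -
  obtain a where "g a = c x" using exists_a by blast
  moreover have "\<And>b. g b = c x \<Longrightarrow> b = a"
  proof -
    fix b assume "g b = c x"
    thus "b = a" using g_strict[of a b] g_strict[of b a] \<open>g a = c x\<close> by (cases a b rule: linorder_cases) auto
  qed
  ultimately have "(THE a. g a = c x) = a" by (rule the_equality)
  thus ?thesis using \<open>g a = c x\<close> unfolding astar_def by simp
qed

lemma astar_unique: "g b = c x \<Longrightarrow> b = astar x"
  using astar[of x] g_strict[of b "astar x"] g_strict[of "astar x" b] by (cases b "astar x" rule: linorder_cases) auto

lemma pstar_eq: assumes "0 < x" shows "pstar y x = astar x"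
  unfolding pstar_def y_inf
proof (rule Greatest_equality)
  show "Y (astar x) = x" using Y_eq_iff[OF assms] astar by simp
  fix p assume "Y p = x" thus "p \<le> astar x" using Y_eq_iff[OF assms] astar_unique by simp
qed

lemma Y_gt_set: assumes "0 < x" shows "x < Y p \<longleftrightarrow> p < astar x"
  using Y_gt_iff[OF assms, of p] astar[of x] g_strict[of p "astar x"] g_anti[of "astar x" p]
  by (cases "p < astar x") auto

end

lemma abs_diff_le_add: "\<bar>a\<bar> \<le> p \<Longrightarrow> \<bar>b\<bar> \<le> q \<Longrightarrow> \<bar>a - b\<bar> \<le> p + (q::real)" by linarith

lemma abs_diff_le2: "\<bar>a\<bar> \<le> e \<Longrightarrow> \<bar>b\<bar> \<le> e \<Longrightarrow> \<bar>a - b\<bar> \<le> 2 * (e::real)" by linarith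

context mdl begin

lemma traj_bounds: "0 \<le> x \<Longrightarrow> 0 \<le> traj y x \<omega> t \<and> traj y x \<omega> t \<le> x"
proof (induction t)
  case 0 thus ?case by simp
next
  case (Suc t) thus ?case using y_eq[of "traj y x \<omega> t" "\<omega> t"] Y_nonneg[of "\<omega> t"] by auto
qed

lemma traj_Suc: "0 \<le> x \<Longrightarrow> traj y x \<omega> (Suc t) = min (traj y x \<omega> t) (Y (\<omega> t))"
  using traj_bounds[of x \<omega> t] y_eq by simp

lemma traj_lip: "0 \<le> x \<Longrightarrow> 0 \<le> x' \<Longrightarrow> \<bar>traj y x \<omega> t - traj y x' \<omega> t\<bar> \<le> \<bar>x - x'\<bar>"
proof (induction t)
  case 0 thus ?case by simp
next
  case (Suc t) thus ?case by (simp del: traj.simps(2) add: traj_Suc min_def) linarith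
qed

definition bt :: "real \<Rightarrow> nat \<Rightarrow> (nat \<Rightarrow> real) \<Rightarrow> bool" where
  "bt x0 t \<omega> \<longleftrightarrow> (\<forall>s<t. x0 < Y (\<omega> s))"

lemma bt_Suc: "bt x0 (Suc t) \<omega> \<longleftrightarrow> bt x0 t \<omega> \<and> x0 < Y (\<omega> t)"
  unfolding bt_def using less_Suc_eq by auto

lemma traj_bt: "0 \<le> x0 \<Longrightarrow> bt x0 t \<omega> \<Longrightarrow> traj y x0 \<omega> t = x0"
proof (induction t)
  case 0 thus ?case by simp
next
  case (Suc t) thus ?case by (simp del: traj.simps(2) add: traj_Suc bt_Suc min_def)
qed

lemma traj_local:
  assumes x0: "0 < x0" and ne: "\<forall>s<t. Y (\<omega> s) \<noteq> x0"
  shows "eventually (\<lambda>x. traj y x \<omega> t = (if bt x0 t \<omega> then x else traj y x0 \<omega> t)) (nhds x0)"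
  using ne
proof (induction t)
  case 0 thus ?case by (simp add: bt_def)
next
  case (Suc t)
  have IH: "eventually (\<lambda>x. traj y x \<omega> t = (if bt x0 t \<omega> then x else traj y x0 \<omega> t)) (nhds x0)"
    using Suc by auto
  have pos: "eventually (\<lambda>x. 0 < x) (nhds x0)"
    using eventually_nhds_in_open[of "{0<..}" x0] x0 by simp
  have neq: "Y (\<omega> t) \<noteq> x0" using Suc.prems by auto
  show ?case
  proof (cases "x0 < Y (\<omega> t)")
    case True
    have lt: "eventually (\<lambda>x. x < Y (\<omega> t)) (nhds x0)"
      using eventually_nhds_in_open[of "{..<Y (\<omega> t)}" x0] True by simp
    from IH pos lt show ?thesis
    proof eventually_elim
      case (elim x) thus ?case using True x0 by (auto simp del: traj.simps(2) simp: traj_Suc bt_Suc min_def)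
    qed
  next
    case False
    hence gt: "Y (\<omega> t) < x0" using neq by auto
    have lt: "eventually (\<lambda>x. Y (\<omega> t) < x) (nhds x0)"
      using eventually_nhds_in_open[of "{Y (\<omega> t)<..}" x0] gt by simp
    from IH pos lt show ?thesis
    proof eventually_elim
      case (elim x) thus ?case using False x0 traj_bt[of x0 t \<omega>] by (auto simp del: traj.simps(2) simp: traj_Suc bt_Suc min_def)
    qed
  qed
qed

definition r :: "nat \<Rightarrow> real \<Rightarrow> (nat \<Rightarrow> real) \<Rightarrow> real" where
  "r t x \<omega> = \<beta> ^ t * (\<omega> t * (traj y x \<omega> t - traj y x \<omega> (Suc t)) - C (traj y x \<omega> (Suc t)))"

definition ind :: "real \<Rightarrow> nat \<Rightarrow> (nat \<Rightarrow> real) \<Rightarrow> real" where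
  "ind x0 t \<omega> = (if bt x0 t \<omega> then 1 else 0)"

definition D :: "nat \<Rightarrow> real \<Rightarrow> (nat \<Rightarrow> real) \<Rightarrow> real" where
  "D t x0 \<omega> = \<beta> ^ t * (\<omega> t * (ind x0 t \<omega> - ind x0 (Suc t) \<omega>) - c x0 * ind x0 (Suc t) \<omega>)"

lemma C_deriv_at: assumes "0 < x" shows "(C has_real_derivative c x) (at x)"
proof -
  have "at x within {0..} = at x" by (rule at_within_interior) (use assms in simp)
  moreover have "(C has_real_derivative c x) (at x within {0..})" using C_deriv assms by simp
  ultimately show ?thesis by simp
qed

lemma r_deriv:
  assumes x0: "0 < x0" and ne: "\<forall>s\<le>t. Y (\<omega> s) \<noteq> x0"
  shows "((\<lambda>x. r t x \<omega>) has_real_derivative D t x0 \<omega>) (at x0)"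
proof -
  let ?L = "\<lambda>t x. if bt x0 t \<omega> then x else traj y x0 \<omega> t"
  have e1: "eventually (\<lambda>x. traj y x \<omega> t = ?L t x) (nhds x0)"
    using traj_local[OF x0] ne by auto
  have e2: "eventually (\<lambda>x. traj y x \<omega> (Suc t) = ?L (Suc t) x) (nhds x0)"
    using traj_local[OF x0, of "Suc t"] ne by (auto simp: less_Suc_eq_le)
  have ev: "eventually (\<lambda>x. r t x \<omega> = \<beta> ^ t * (\<omega> t * (?L t x - ?L (Suc t) x) - C (?L (Suc t) x))) (nhds x0)"
    using e1 e2 by eventually_elim (simp add: r_def)
  have dL: "((\<lambda>x. ?L s x) has_real_derivative ind x0 s \<omega>) (at x0)" for s
    by (cases "bt x0 s \<omega>") (auto simp: ind_def intro!: derivative_eq_intros)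
  have dC: "((\<lambda>x. C (?L (Suc t) x)) has_real_derivative c x0 * ind x0 (Suc t) \<omega>) (at x0)"
  proof (cases "bt x0 (Suc t) \<omega>")
    case True thus ?thesis using C_deriv_at[OF x0] by (simp add: ind_def)
  next
    case False thus ?thesis by (simp add: ind_def)
  qed
  have "((\<lambda>x. \<beta> ^ t * (\<omega> t * (?L t x - ?L (Suc t) x) - C (?L (Suc t) x))) has_real_derivative D t x0 \<omega>) (at x0)"
    unfolding D_def
    by (intro DERIV_cmult DERIV_diff DERIV_cmult dL dC)
  thus ?thesis using DERIV_cong_ev[OF refl ev refl] by simp
qed

lemma C_lip:
  assumes "0 \<le> u" "u \<le> B" "0 \<le> v" "v \<le> B"
  shows "\<bar>C u - C v\<bar> \<le> (\<bar>c 0\<bar> + \<bar>c B\<bar>) * \<bar>u - v\<bar>"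
proof -
  have "norm (C u - C v) \<le> (\<bar>c 0\<bar> + \<bar>c B\<bar>) * norm (u - v)"
  proof (rule field_differentiable_bound[of "{0..B}"])
    show "convex {0..B}" by simp
    fix z assume z: "z \<in> {0..B}"
    thus "(C has_field_derivative c z) (at z within {0..B})"
      using C_deriv has_field_derivative_subset[of C "c z" z "{0..}" "{0..B}"] by auto
    have "c 0 \<le> c z" "c z \<le> c B" using z c_mono by auto
    thus "norm (c z) \<le> \<bar>c 0\<bar> + \<bar>c B\<bar>" by auto
  qed (use assms in auto)
  thus ?thesis by simp
qed

lemma r_lip:
  assumes "0 \<le> x" "x \<le> B" "0 \<le> x'" "x' \<le> B"
  shows "\<bar>r t x \<omega> - r t x' \<omega>\<bar> \<le> \<beta> ^ t * (2 * \<bar>\<omega> t\<bar> + (\<bar>c 0\<bar> + \<bar>c B\<bar>)) * \<bar>x - x'\<bar>"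
proof -
  let ?a = "traj y x \<omega> t" and ?b = "traj y x \<omega> (Suc t)"
  let ?a' = "traj y x' \<omega> t" and ?b' = "traj y x' \<omega> (Suc t)"
  have la: "\<bar>?a - ?a'\<bar> \<le> \<bar>x - x'\<bar>" by (rule traj_lip) (use assms in auto)
  have lb: "\<bar>?b - ?b'\<bar> \<le> \<bar>x - x'\<bar>" by (rule traj_lip) (use assms in auto)
  have bb: "0 \<le> ?b" "?b \<le> B" "0 \<le> ?b'" "?b' \<le> B"
    using traj_bounds[of x \<omega> "Suc t"] traj_bounds[of x' \<omega> "Suc t"] assms by auto
  have lc: "\<bar>C ?b - C ?b'\<bar> \<le> (\<bar>c 0\<bar> + \<bar>c B\<bar>) * \<bar>x - x'\<bar>"
    using C_lip[OF bb] lb by (meson order_trans mult_left_mono abs_ge_zero add_nonneg_nonneg)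
  have "\<bar>\<omega> t * (?a - ?b) - \<omega> t * (?a' - ?b')\<bar> = \<bar>\<omega> t\<bar> * \<bar>(?a - ?a') - (?b - ?b')\<bar>"
    by (simp add: abs_mult[symmetric] algebra_simps)
  also have "\<dots> \<le> \<bar>\<omega> t\<bar> * (2 * \<bar>x - x'\<bar>)"
  proof (rule mult_left_mono)
    show "\<bar>(?a - ?a') - (?b - ?b')\<bar> \<le> 2 * \<bar>x - x'\<bar>"
      using la lb by (rule abs_diff_le2)
  qed simp
  finally have l1: "\<bar>\<omega> t * (?a - ?b) - \<omega> t * (?a' - ?b')\<bar> \<le> 2 * \<bar>\<omega> t\<bar> * \<bar>x - x'\<bar>" by simp
  have "r t x \<omega> - r t x' \<omega> = \<beta> ^ t * ((\<omega> t * (?a - ?b) - \<omega> t * (?a' - ?b')) - (C ?b - C ?b'))"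
    unfolding r_def by (simp add: algebra_simps)
  hence "\<bar>r t x \<omega> - r t x' \<omega>\<bar> = \<beta> ^ t * \<bar>(\<omega> t * (?a - ?b) - \<omega> t * (?a' - ?b')) - (C ?b - C ?b')\<bar>"
    using beta by (simp add: abs_mult)
  also have "\<dots> \<le> \<beta> ^ t * (2 * \<bar>\<omega> t\<bar> * \<bar>x - x'\<bar> + (\<bar>c 0\<bar> + \<bar>c B\<bar>) * \<bar>x - x'\<bar>)"
    using l1 lc beta by (intro mult_left_mono abs_diff_le_add) auto
  finally show ?thesis by (simp add: algebra_simps)
qed

end

context mdl begin

abbreviation P :: "(nat \<Rightarrow> real) measure" where "P \<equiv> PiM UNIV (\<lambda>_. M)"

lemma probP: "prob_space P"
  by (rule prob_space_PiM) (simp add: M_prob)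

end

sublocale mdl \<subseteq> PP: prob_space "PiM UNIV (\<lambda>_::nat. M)"
  by (rule prob_space_PiM) (simp add: M_prob)

sublocale mdl \<subseteq> MM: prob_space M
  by (rule M_prob)

context mdl begin

lemma meas_M_borel: "measurable N M = measurable N borel"
  by (rule measurable_cong_sets) (simp_all add: M_borel)

lemma meas_M_borel2: "measurable M N = measurable borel N"
  by (rule measurable_cong_sets) (simp_all add: M_borel)

lemma comp_meas[measurable]: "(\<lambda>\<omega>. \<omega> t) \<in> borel_measurable P"
proof -
  have "(\<lambda>\<omega>. \<omega> t) \<in> measurable P M" by (rule measurable_component_singleton) simp
  thus ?thesis by (simp add: meas_M_borel)
qed

lemma Y_meas[measurable]: "Y \<in> borel_measurable borel"
proof -
  have "mono (\<lambda>p. - Y p)" by (rule monoI) (simp add: Y_anti)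
  hence "(\<lambda>p. - Y p) \<in> borel_measurable borel" by (rule borel_measurable_mono)
  hence "(\<lambda>p. - (- Y p)) \<in> borel_measurable borel" by measurable
  thus ?thesis by simp
qed

lemma C_meas[measurable]: "(\<lambda>u. C (max 0 u)) \<in> borel_measurable borel"
proof -
  have "mono (\<lambda>u. C (max 0 u))"
    by (rule monoI) (auto intro!: mono_onD[OF C_mono] simp: max_def)
  thus ?thesis by (rule borel_measurable_mono)
qed

lemma traj_meas[measurable]: "0 \<le> x \<Longrightarrow> (\<lambda>\<omega>. traj y x \<omega> t) \<in> borel_measurable P"
proof (induction t)
  case 0 thus ?case by simp
next
  case (Suc t)
  have "(\<lambda>\<omega>. min (traj y x \<omega> t) (Y (\<omega> t))) \<in> borel_measurable P"
    using Suc by measurable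
  thus ?case using traj_Suc[OF Suc.prems] by (simp del: traj.simps(2))
qed

lemma r_meas[measurable]: assumes "0 \<le> x" shows "r t x \<in> borel_measurable P"
proof -
  have m: "(\<lambda>\<omega>. \<beta> ^ t * (\<omega> t * (traj y x \<omega> t - traj y x \<omega> (Suc t)) - C (max 0 (traj y x \<omega> (Suc t)))))
     \<in> borel_measurable P"
    using assms by measurable
  have "r t x = (\<lambda>\<omega>. \<beta> ^ t * (\<omega> t * (traj y x \<omega> t - traj y x \<omega> (Suc t)) - C (max 0 (traj y x \<omega> (Suc t)))))"
    using traj_bounds[OF assms] by (auto simp del: traj.simps(2) simp: r_def fun_eq_iff max_def)
  thus ?thesis using m by simp
qed

lemma distr_comp: "distr P M (\<lambda>\<omega>. \<omega> t) = M"
  by (rule distr_PiM_component) (simp_all add: M_prob)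

lemma integrable_comp: fixes f :: "real \<Rightarrow> real" assumes "integrable M f" shows "integrable P (\<lambda>\<omega>. f (\<omega> t))"
proof -
  have fm: "f \<in> borel_measurable M" using assms by simp
  have "integrable (distr P M (\<lambda>\<omega>. \<omega> t)) f" using assms distr_comp by simp
  have g: "(\<lambda>\<omega>. \<omega> t) \<in> measurable P M" by (rule measurable_component_singleton) simp
  thus ?thesis using integrable_distr_eq[OF g fm] \<open>integrable (distr P M (\<lambda>\<omega>. \<omega> t)) f\<close> by simp
qed

lemma integral_comp: fixes f :: "real \<Rightarrow> real" assumes "f \<in> borel_measurable M" shows "(\<integral>\<omega>. f (\<omega> t) \<partial>P) = (\<integral>p. f p \<partial>M)"
proof -
  have "(\<integral>p. f p \<partial>M) = (\<integral>p. f p \<partial>(distr P M (\<lambda>\<omega>. \<omega> t)))" using distr_comp by simp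
  also have "\<dots> = (\<integral>\<omega>. f (\<omega> t) \<partial>P)"
  proof -
    have g: "(\<lambda>\<omega>. \<omega> t) \<in> measurable P M" by (rule measurable_component_singleton) simp
    show ?thesis by (rule integral_distr[OF g assms])
  qed
  finally show ?thesis by simp
qed

lemma integrable_abs_p: "integrable M (\<lambda>p. \<bar>p\<bar>)"
  using M_mean by simp

definition Ep :: real where "Ep = (\<integral>p. \<bar>p\<bar> \<partial>M)"

lemma r_bound: assumes "0 \<le> x" shows "\<bar>r t x \<omega>\<bar> \<le> \<beta> ^ t * (\<bar>\<omega> t\<bar> * x + (\<bar>C 0\<bar> + \<bar>C x\<bar>))"
proof -
  let ?a = "traj y x \<omega> t" and ?b = "traj y x \<omega> (Suc t)"
  have ab: "0 \<le> ?b" "?b \<le> ?a" "?a \<le> x" "0 \<le> ?a"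
    using traj_bounds[OF assms, of \<omega> t] traj_bounds[OF assms, of \<omega> "Suc t"] traj_Suc[OF assms, of \<omega> t]
    by (auto simp del: traj.simps(2))
  have "\<bar>\<omega> t * (?a - ?b)\<bar> \<le> \<bar>\<omega> t\<bar> * x"
    using ab by (auto simp: abs_mult intro!: mult_left_mono)
  moreover have "C 0 \<le> C ?b" "C ?b \<le> C x" using ab assms by (auto intro!: mono_onD[OF C_mono])
  hence "\<bar>C ?b\<bar> \<le> \<bar>C 0\<bar> + \<bar>C x\<bar>" by linarith
  ultimately have "\<bar>\<omega> t * (?a - ?b) - C ?b\<bar> \<le> \<bar>\<omega> t\<bar> * x + (\<bar>C 0\<bar> + \<bar>C x\<bar>)"
    by (rule abs_diff_le_add)
  hence "\<beta> ^ t * \<bar>\<omega> t * (?a - ?b) - C ?b\<bar> \<le> \<beta> ^ t * (\<bar>\<omega> t\<bar> * x + (\<bar>C 0\<bar> + \<bar>C x\<bar>))"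
    using beta by (intro mult_left_mono) auto
  thus ?thesis unfolding r_def using beta by (simp add: abs_mult)
qed

lemma r_integrable: assumes "0 \<le> x" shows "integrable P (r t x)"
proof (rule Bochner_Integration.integrable_bound)
  show "integrable P (\<lambda>\<omega>. \<beta> ^ t * (\<bar>\<omega> t\<bar> * x + (\<bar>C 0\<bar> + \<bar>C x\<bar>)))"
    using integrable_comp[OF integrable_abs_p, of t] by auto
  show "r t x \<in> borel_measurable P" using assms by simp
  show "AE \<omega> in P. norm (r t x \<omega>) \<le> norm (\<beta> ^ t * (\<bar>\<omega> t\<bar> * x + (\<bar>C 0\<bar> + \<bar>C x\<bar>)))"
    using r_bound[OF assms] beta by (auto intro!: AE_I2 order.trans[OF _ abs_ge_self])
qed

end

lemma deriv_integral:
  fixes f :: "real \<Rightarrow> 'a \<Rightarrow> real" and N :: "'a measure"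
  assumes \<delta>: "0 < \<delta>"
  and int: "\<And>x. x \<in> ball x0 \<delta> \<Longrightarrow> integrable N (f x)"
  and G: "integrable N G"
  and lip: "\<And>x. x \<in> ball x0 \<delta> \<Longrightarrow> AE \<omega> in N. \<bar>f x \<omega> - f x0 \<omega>\<bar> \<le> G \<omega> * \<bar>x - x0\<bar>"
  and der: "AE \<omega> in N. ((\<lambda>x. f x \<omega>) has_real_derivative Dv \<omega>) (at x0)"
  and Dm: "Dv \<in> borel_measurable N"
  shows "((\<lambda>x. \<integral>\<omega>. f x \<omega> \<partial>N) has_real_derivative (\<integral>\<omega>. Dv \<omega> \<partial>N)) (at x0)"
proof -
  have x0in: "x0 \<in> ball x0 \<delta>" using \<delta> by simp
  have at_eq: "at x0 within ball x0 \<delta> = at x0" by (rule at_within_open) (simp_all add: \<delta>)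
  have "((\<lambda>x. ((\<integral>\<omega>. f x \<omega> \<partial>N) - (\<integral>\<omega>. f x0 \<omega> \<partial>N)) / (x - x0)) \<longlongrightarrow> (\<integral>\<omega>. Dv \<omega> \<partial>N)) (at x0 within ball x0 \<delta>)"
    unfolding tendsto_at_iff_sequentially comp_def
  proof (intro allI impI)
    fix X :: "nat \<Rightarrow> real" assume X: "\<forall>i. X i \<in> ball x0 \<delta> - {x0}" and Xl: "X \<longlonglongrightarrow> x0"
    define s where "s i \<omega> = (f (X i) \<omega> - f x0 \<omega>) / (X i - x0)" for i \<omega>
    have eq: "((\<integral>\<omega>. f (X i) \<omega> \<partial>N) - (\<integral>\<omega>. f x0 \<omega> \<partial>N)) / (X i - x0) = (\<integral>\<omega>. s i \<omega> \<partial>N)" for i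
      unfolding s_def using X int[OF x0in] int[of "X i"]
      by (simp add: integral_diff)
    have "(\<lambda>i. \<integral>\<omega>. s i \<omega> \<partial>N) \<longlonglongrightarrow> (\<integral>\<omega>. Dv \<omega> \<partial>N)"
    proof (rule integral_dominated_convergence[where w=G])
      show "Dv \<in> borel_measurable N" by (rule Dm)
      show "s i \<in> borel_measurable N" for i
        unfolding s_def using X int[OF x0in] int[of "X i"] by (intro borel_measurable_divide borel_measurable_diff) auto
      show "integrable N G" by (rule G)
      show "AE \<omega> in N. (\<lambda>i. s i \<omega>) \<longlonglongrightarrow> Dv \<omega>"
        using der
      proof eventually_elim
        case (elim \<omega>)
        hence "((\<lambda>x. (f x \<omega> - f x0 \<omega>) / (x - x0)) \<longlongrightarrow> Dv \<omega>) (at x0)"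
          by (simp add: has_field_derivative_iff)
        hence "\<forall>X. (\<forall>i. X i \<in> UNIV - {x0}) \<longrightarrow> X \<longlonglongrightarrow> x0 \<longrightarrow> ((\<lambda>x. (f x \<omega> - f x0 \<omega>) / (x - x0)) \<circ> X) \<longlonglongrightarrow> Dv \<omega>"
          using tendsto_at_iff_sequentially[of _ _ x0 UNIV] by blast
        thus ?case using X Xl by (auto simp: s_def comp_def)
      qed
      show "AE \<omega> in N. norm (s i \<omega>) \<le> G \<omega>" for i
        using lip[of "X i"] X
      proof -
        have ne: "X i \<noteq> x0" and xi: "X i \<in> ball x0 \<delta>" using X by auto
        from lip[OF xi] show ?thesis
        proof eventually_elim
          case (elim \<omega>)
          have "\<bar>X i - x0\<bar> > 0" using ne by simp
          thus ?case using elim by (simp add: s_def abs_divide pos_divide_le_eq)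
        qed
      qed
    qed
    thus "(\<lambda>i. ((\<integral>\<omega>. f (X i) \<omega> \<partial>N) - (\<integral>\<omega>. f x0 \<omega> \<partial>N)) / (X i - x0)) \<longlonglongrightarrow> (\<integral>\<omega>. Dv \<omega> \<partial>N)"
      by (simp add: eq)
  qed
  thus ?thesis unfolding has_field_derivative_iff at_eq .
qed


context mdl begin

lemma ae_summable: "AE \<omega> in P. summable (\<lambda>t. \<beta> ^ t * \<bar>\<omega> t\<bar>)"
proof -
  have int1: "integrable P (\<lambda>\<omega>. \<beta> ^ t * \<bar>\<omega> t\<bar>)" for t
    using integrable_comp[OF integrable_abs_p, of t] by simp
  have e1: "(\<integral>\<^sup>+\<omega>. ennreal (\<beta> ^ t * \<bar>\<omega> t\<bar>) \<partial>P) = ennreal (\<beta> ^ t * Ep)" for t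
  proof -
    have "(\<integral>\<^sup>+\<omega>. ennreal (\<beta> ^ t * \<bar>\<omega> t\<bar>) \<partial>P) = ennreal (\<integral>\<omega>. \<beta> ^ t * \<bar>\<omega> t\<bar> \<partial>P)"
      using int1 beta by (intro nn_integral_eq_integral) auto
    also have "(\<integral>\<omega>. \<beta> ^ t * \<bar>\<omega> t\<bar> \<partial>P) = \<beta> ^ t * Ep"
      using integral_comp[of "\<lambda>p. \<bar>p\<bar>" t] by (simp add: Ep_def meas_M_borel2)
    finally show ?thesis .
  qed
  have Ep_nn: "0 \<le> Ep" unfolding Ep_def by simp
  have sg: "summable (\<lambda>t. \<beta> ^ t * Ep)" using beta by (intro summable_mult2) simp
  have "(\<integral>\<^sup>+\<omega>. (\<Sum>t. ennreal (\<beta> ^ t * \<bar>\<omega> t\<bar>)) \<partial>P) = (\<Sum>t. \<integral>\<^sup>+\<omega>. ennreal (\<beta> ^ t * \<bar>\<omega> t\<bar>) \<partial>P)"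
    by (rule nn_integral_suminf) simp
  also have "\<dots> = (\<Sum>t. ennreal (\<beta> ^ t * Ep))" by (simp add: e1)
  also have "\<dots> \<noteq> \<infinity>"
  proof -
    have nn: "\<And>t. 0 \<le> \<beta> ^ t * Ep" using Ep_nn beta by simp
    show ?thesis unfolding infinity_ennreal_def by (rule ennreal_suminf_neq_top[OF sg nn])
  qed
  finally have "(\<integral>\<^sup>+\<omega>. (\<Sum>t. ennreal (\<beta> ^ t * \<bar>\<omega> t\<bar>)) \<partial>P) \<noteq> \<infinity>" .
  hence "AE \<omega> in P. (\<Sum>t. ennreal (\<beta> ^ t * \<bar>\<omega> t\<bar>)) \<noteq> \<infinity>"
    by (intro nn_integral_PInf_AE borel_measurable_suminf_order) simp_all
  thus ?thesis
  proof eventually_elim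
    case (elim \<omega>)
    have "\<And>t. 0 \<le> \<beta> ^ t * \<bar>\<omega> t\<bar>" using beta by simp
    thus ?case using elim[unfolded infinity_ennreal_def] by (rule summable_suminf_not_top)
  qed
qed

lemma Vbar_sum:
  assumes x: "0 \<le> x"
  shows "Vbar y M C \<beta> x = (\<Sum>t. \<integral>\<omega>. r t x \<omega> \<partial>P)" and "summable (\<lambda>t. \<integral>\<omega>. r t x \<omega> \<partial>P)"
proof -
  define K where "K = \<bar>C 0\<bar> + \<bar>C x\<bar>"
  have Vb: "Vbar y M C \<beta> x = (\<integral>\<omega>. (\<Sum>t. r t x \<omega>) \<partial>P)"
    unfolding Vbar_def r_def by simp
  have int: "integrable P (r t x)" for t by (rule r_integrable[OF x])
  have ae: "AE \<omega> in P. summable (\<lambda>t. norm (r t x \<omega>))"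
    using ae_summable
  proof eventually_elim
    case (elim \<omega>)
    have "summable (\<lambda>t. (\<beta> ^ t * \<bar>\<omega> t\<bar>) * x + \<beta> ^ t * K)"
      using elim beta by (intro summable_add summable_mult2) auto
    thus ?case
      by (rule summable_comparison_test'[where N=0]) (use r_bound[OF x] in \<open>simp add: K_def algebra_simps\<close>)
  qed
  have sums: "summable (\<lambda>t. \<integral>\<omega>. norm (r t x \<omega>) \<partial>P)"
  proof -
    have b: "(\<integral>\<omega>. norm (r t x \<omega>) \<partial>P) \<le> \<beta> ^ t * (Ep * x + K)" for t
    proof -
      have "(\<integral>\<omega>. norm (r t x \<omega>) \<partial>P) \<le> (\<integral>\<omega>. \<beta> ^ t * (\<bar>\<omega> t\<bar> * x + K) \<partial>P)"
        using r_bound[OF x] int integrable_comp[OF integrable_abs_p, of t]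
        by (intro integral_mono) (auto simp: K_def)
      also have "\<dots> = \<beta> ^ t * (Ep * x + K)"
        using integrable_comp[OF integrable_abs_p, of t] integral_comp[of "\<lambda>p. \<bar>p\<bar>" t]
        by (simp add: Ep_def meas_M_borel2 K_def PP.prob_space)
      finally show ?thesis .
    qed
    have "summable (\<lambda>t. \<beta> ^ t * (Ep * x + K))" using beta by (intro summable_mult2) simp
    thus ?thesis by (rule summable_comparison_test'[where N=0]) (use b in simp)
  qed
  show "Vbar y M C \<beta> x = (\<Sum>t. \<integral>\<omega>. r t x \<omega> \<partial>P)"
    unfolding Vb by (rule integral_suminf[OF int ae sums])
  show "summable (\<lambda>t. \<integral>\<omega>. r t x \<omega> \<partial>P)"
    by (rule summable_integral[OF int ae sums])
qed

end

context mdl begin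

lemma ae_M_ne: "AE p in M. p \<noteq> a"
proof (rule AE_I[of _ _ "{a}"])
  show "{x \<in> space M. \<not> x \<noteq> a} \<subseteq> {a}" by auto
  show "emeasure M {a} = 0" using M_no_atoms MM.emeasure_eq_measure by simp
  show "{a} \<in> sets M" using M_borel by simp
qed

lemma ae_noties: assumes x0: "0 < x0" shows "AE \<omega> in P. \<forall>s. Y (\<omega> s) \<noteq> x0"
proof -
  have "AE p in M. Y p \<noteq> x0"
    using ae_M_ne[of "astar x0"]
  proof eventually_elim
    case (elim p) thus ?case using Y_eq_iff[OF x0, of p] astar_unique by blast
  qed
  hence "AE \<omega> in P. Y (\<omega> s) \<noteq> x0" for s
    by (intro AE_PiM_component) (simp_all add: M_prob)
  thus ?thesis by (simp add: AE_all_countable)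
qed

lemma ind_Suc: "ind x0 (Suc t) \<omega> = ind x0 t \<omega> * indicator {p. x0 < Y p} (\<omega> t)"
  by (simp add: ind_def bt_Suc indicator_def)

lemma ind_0: "ind x0 0 \<omega> = 1"
  by (simp add: ind_def bt_def)

lemma ind_meas[measurable]: "ind x0 t \<in> borel_measurable P"
proof (induction t)
  case 0 thus ?case by (simp add: ind_0)
next
  case (Suc t)
  have "(\<lambda>\<omega>. ind x0 t \<omega> * indicator {p. x0 < Y p} (\<omega> t)) \<in> borel_measurable P"
    using Suc by measurable
  thus ?case by (simp add: ind_Suc)
qed

lemma D_meas[measurable]: "D t x0 \<in> borel_measurable P"
  unfolding D_def by measurable

lemma v_deriv:
  assumes x0: "0 < x0"
  shows "((\<lambda>x. \<integral>\<omega>. r t x \<omega> \<partial>P) has_real_derivative (\<integral>\<omega>. D t x0 \<omega> \<partial>P)) (at x0)"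
proof (rule deriv_integral[where \<delta>="x0/2" and G="\<lambda>\<omega>. \<beta> ^ t * (2 * \<bar>\<omega> t\<bar> + (\<bar>c 0\<bar> + \<bar>c (2*x0)\<bar>))"])
  show "0 < x0 / 2" using x0 by simp
  have ball: "0 \<le> x \<and> x \<le> 2 * x0" if "x \<in> ball x0 (x0/2)" for x
    using that by (auto simp: dist_real_def abs_if split: if_split_asm)
  show "integrable P (r t x)" if "x \<in> ball x0 (x0/2)" for x
    using ball[OF that] by (intro r_integrable) simp
  show "integrable P (\<lambda>\<omega>. \<beta> ^ t * (2 * \<bar>\<omega> t\<bar> + (\<bar>c 0\<bar> + \<bar>c (2*x0)\<bar>)))"
    using integrable_comp[OF integrable_abs_p, of t] by auto
  show "AE \<omega> in P. \<bar>r t x \<omega> - r t x0 \<omega>\<bar> \<le> \<beta> ^ t * (2 * \<bar>\<omega> t\<bar> + (\<bar>c 0\<bar> + \<bar>c (2*x0)\<bar>)) * \<bar>x - x0\<bar>"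
    if "x \<in> ball x0 (x0/2)" for x
    using ball[OF that] x0 by (intro AE_I2 r_lip) auto
  show "AE \<omega> in P. ((\<lambda>x. r t x \<omega>) has_real_derivative D t x0 \<omega>) (at x0)"
    using ae_noties[OF x0] by eventually_elim (intro r_deriv[OF x0], auto)
  show "D t x0 \<in> borel_measurable P" by simp
qed

end

context mdl begin

lemma space_M: "space M = UNIV"
  using sets_eq_imp_space_eq[OF M_borel] by simp

lemma coords_indep: "PP.indep_vars (\<lambda>_. M) (\<lambda>s \<omega>. \<omega> s) UNIV"
proof -
  have rv: "\<And>i. (\<lambda>\<omega>. \<omega> i) \<in> measurable P M" by (rule measurable_component_singleton) simp
  have "distr P (PiM UNIV (\<lambda>_. M)) (\<lambda>x. \<lambda>i\<in>UNIV. x i) = PiM UNIV (\<lambda>i. distr P M (\<lambda>\<omega>. \<omega> i))"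
  proof -
    have "(\<lambda>x. \<lambda>i\<in>UNIV. x i) = (\<lambda>x::nat\<Rightarrow>real. x)" by (auto simp: restrict_def fun_eq_iff)
    thus ?thesis by (simp add: distr_comp)
  qed
  thus ?thesis by (subst PP.indep_vars_iff_distr_eq_PiM) (simp_all add: rv)
qed

lemma prod_integral:
  fixes F :: "nat \<Rightarrow> real \<Rightarrow> real"
  assumes fin: "finite I" and int: "\<And>s. s \<in> I \<Longrightarrow> integrable M (F s)"
  shows "(\<integral>\<omega>. (\<Prod>s\<in>I. F s (\<omega> s)) \<partial>P) = (\<Prod>s\<in>I. \<integral>p. F s p \<partial>M)"
proof -
  have ind: "PP.indep_vars (\<lambda>_. borel) (\<lambda>s \<omega>. F s (\<omega> s)) I"
    by (rule PP.indep_vars_compose2[OF PP.indep_vars_subset[OF coords_indep]]) (use int in auto)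
  have "(\<integral>\<omega>. (\<Prod>s\<in>I. F s (\<omega> s)) \<partial>P) = (\<Prod>s\<in>I. \<integral>\<omega>. F s (\<omega> s) \<partial>P)"
    by (rule PP.indep_vars_lebesgue_integral[OF fin ind]) (rule integrable_comp[OF int])
  also have "\<dots> = (\<Prod>s\<in>I. \<integral>p. F s p \<partial>M)"
    by (intro prod.cong refl integral_comp) (use int in auto)
  finally show ?thesis .
qed

definition Aset :: "real \<Rightarrow> real set" where "Aset x0 = {p. x0 < Y p}"
definition q :: "real \<Rightarrow> real" where "q x0 = measure M (Aset x0)"
definition h :: "real \<Rightarrow> real \<Rightarrow> real" where
  "h x0 p = p - p * indicator (Aset x0) p - c x0 * indicator (Aset x0) p"
definition Kx :: "real \<Rightarrow> real" where "Kx x0 = (\<integral>p. h x0 p \<partial>M)"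

lemma Aset_sets: "Aset x0 \<in> sets M"
  unfolding Aset_def using M_borel by simp

lemma int_ind: "integrable M (indicator (Aset x0) :: real \<Rightarrow> real)"
  using Aset_sets by (intro integrable_real_indicator) (simp_all add: MM.emeasure_eq_measure)

lemma int_h: "integrable M (h x0)"
  unfolding h_def using Aset_sets M_mean int_ind
  by (intro Bochner_Integration.integrable_diff integrable_real_mult_indicator integrable_mult_right) auto

lemma ind_prod: "ind x0 t \<omega> = (\<Prod>s<t. indicator (Aset x0) (\<omega> s))"
  by (induction t) (simp_all add: ind_0 ind_Suc Aset_def)

lemma D_eq: "D t x0 \<omega> = \<beta> ^ t * (\<Prod>s<Suc t. (if s < t then indicator (Aset x0) else h x0) (\<omega> s))"
proof -
  have "(\<Prod>s<Suc t. (if s < t then indicator (Aset x0) else h x0) (\<omega> s)) =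
     (\<Prod>s<t. indicator (Aset x0) (\<omega> s)) * h x0 (\<omega> t)"
    by (simp add: prod.lessThan_Suc)
  thus ?thesis unfolding D_def ind_Suc ind_prod
    by (simp add: h_def Aset_def algebra_simps)
qed

lemma ED: "(\<integral>\<omega>. D t x0 \<omega> \<partial>P) = (\<beta> * q x0) ^ t * Kx x0"
proof -
  have "(\<integral>\<omega>. D t x0 \<omega> \<partial>P) = \<beta> ^ t * (\<integral>\<omega>. (\<Prod>s<Suc t. (if s < t then indicator (Aset x0) else h x0) (\<omega> s)) \<partial>P)"
    unfolding D_eq by simp
  also have "(\<integral>\<omega>. (\<Prod>s<Suc t. (if s < t then indicator (Aset x0) else h x0) (\<omega> s)) \<partial>P)
      = (\<Prod>s<Suc t. \<integral>p. (if s < t then indicator (Aset x0) else h x0) p \<partial>M)"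
    by (rule prod_integral) (auto simp: int_ind int_h)
  also have "\<dots> = (\<Prod>s<t. \<integral>p. indicator (Aset x0) p \<partial>M) * Kx x0"
    by (simp add: prod.lessThan_Suc Kx_def)
  also have "\<dots> = q x0 ^ t * Kx x0"
    by (simp add: q_def space_M)
  finally show ?thesis by (simp add: power_mult_distrib)
qed

end

context mdl begin

lemma q_bounds: "0 \<le> q x" "q x \<le> 1"
  unfolding q_def by (simp_all add: MM.prob_le_1)

lemma h_bound: "\<bar>h x p\<bar> \<le> \<bar>p\<bar> + \<bar>c x\<bar>"
  unfolding h_def by (cases "p \<in> Aset x") auto

lemma Kx_bound: "\<bar>Kx x\<bar> \<le> Ep + \<bar>c x\<bar>"
proof -
  have "\<bar>Kx x\<bar> \<le> (\<integral>p. \<bar>h x p\<bar> \<partial>M)"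
    unfolding Kx_def using integral_norm_bound[of M "h x"] by simp
  also have "\<dots> \<le> (\<integral>p. \<bar>p\<bar> + \<bar>c x\<bar> \<partial>M)"
    using int_h[of x] integrable_abs_p h_bound by (intro integral_mono) auto
  also have "\<dots> = Ep + \<bar>c x\<bar>"
    using integrable_abs_p by (simp add: Ep_def MM.prob_space)
  finally show ?thesis .
qed

lemma Vbar_deriv:
  assumes x0: "0 < x0"
  shows "(Vbar y M C \<beta> has_real_derivative Kx x0 / (1 - \<beta> * q x0)) (at x0)"
proof -
  define S where "S = {x0/2<..<2*x0}"
  define f where "f n x = (\<integral>\<omega>. r n x \<omega> \<partial>P)" for n x
  define f' where "f' n x = (\<beta> * q x) ^ n * Kx x" for n x
  define Kb where "Kb = Ep + (\<bar>c 0\<bar> + \<bar>c (2*x0)\<bar>)"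
  have Spos: "x \<in> S \<Longrightarrow> 0 < x" for x using x0 by (auto simp: S_def)
  have x0S: "x0 \<in> S" using x0 by (auto simp: S_def)
  have cvx: "convex S" unfolding S_def by (rule convex_real_interval)
  have d: "(f n has_field_derivative f' n x) (at x within S)" if "x \<in> S" for n x
    using v_deriv[OF Spos[OF that], of n] ED[of n x] unfolding f_def f'_def
    by (auto intro: has_field_derivative_at_within)
  have bnd: "norm (f' n x) \<le> \<beta> ^ n * Kb" if "x \<in> S" for n x
  proof -
    have x: "0 \<le> x" "x \<le> 2 * x0" using that x0 by (auto simp: S_def)
    have "c 0 \<le> c x" "c x \<le> c (2*x0)" using x c_mono by auto
    hence cx: "\<bar>c x\<bar> \<le> \<bar>c 0\<bar> + \<bar>c (2*x0)\<bar>" by linarith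
    have "\<bar>(\<beta> * q x) ^ n\<bar> \<le> \<beta> ^ n"
      using q_bounds[of x] beta by (auto simp: abs_mult power_abs intro!: power_mono mult_left_le)
    moreover have "\<bar>Kx x\<bar> \<le> Kb" using Kx_bound[of x] cx by (simp add: Kb_def)
    ultimately have "\<bar>(\<beta> * q x) ^ n\<bar> * \<bar>Kx x\<bar> \<le> \<beta> ^ n * Kb"
      by (intro mult_mono) auto
    thus ?thesis by (simp add: f'_def abs_mult)
  qed
  have unif: "uniformly_convergent_on S (\<lambda>n x. \<Sum>i<n. f' i x)"
    by (rule Weierstrass_m_test'[OF bnd]) (use beta in \<open>auto intro: summable_mult2\<close>)
  have sum0: "summable (\<lambda>n. f n x0)" unfolding f_def using Vbar_sum(2)[of x0] x0 by simp
  have int: "x0 \<in> interior S" using x0S unfolding S_def by simp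
  have der: "((\<lambda>x. \<Sum>n. f n x) has_field_derivative (\<Sum>n. f' n x0)) (at x0)"
    by (rule has_field_derivative_series'(2)[OF cvx d unif x0S sum0 int])
  have "(\<lambda>n. (\<beta> * q x0) ^ n) sums (1 / (1 - \<beta> * q x0))"
  proof (rule geometric_sums)
    have a: "\<beta> * q x0 \<le> \<beta> * 1" using q_bounds[of x0] beta by (intro mult_left_mono) auto
    have b: "\<beta> * q x0 < 1" using le_less_trans[OF a] beta by simp
    have c: "0 \<le> \<beta> * q x0" using q_bounds[of x0] beta by simp
    show "norm (\<beta> * q x0) < 1" using b c by simp
  qed
  hence "(\<lambda>n. f' n x0) sums (1 / (1 - \<beta> * q x0) * Kx x0)"
    unfolding f'_def by (rule sums_mult2)
  hence sumeq: "(\<Sum>n. f' n x0) = Kx x0 / (1 - \<beta> * q x0)" by (simp add: sums_iff)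
  have ev: "eventually (\<lambda>x. Vbar y M C \<beta> x = (\<Sum>n. f n x)) (nhds x0)"
  proof -
    have "eventually (\<lambda>x. 0 < x) (nhds x0)"
      using eventually_nhds_in_open[of "{0<..}" x0] x0 by simp
    thus ?thesis by eventually_elim (simp add: f_def Vbar_sum(1))
  qed
  show ?thesis using der DERIV_cong_ev[OF refl ev refl] sumeq by simp
qed

end

context mdl begin

lemma final:
  assumes x: "0 < x"
  shows "(Vbar y M C \<beta> has_real_derivative
        ((\<integral>p. p * indicator {pstar y x<..} p \<partial>M) - measure M {..pstar y x} * c x)
        / (1 - \<beta> * measure M {..pstar y x})) (at x)"
proof -
  define a where "a = astar x"
  have ps: "pstar y x = a" using pstar_eq[OF x] by (simp add: a_def)
  have A: "Aset x = {..<a}" using Y_gt_set[OF x] by (auto simp: Aset_def a_def)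
  have null: "{a} \<in> null_sets M"
    using M_no_atoms M_borel by (intro null_setsI) (simp_all add: MM.emeasure_eq_measure)
  have "measure M {..a} = measure M ({..<a} \<union> {a})"
    by (metis ivl_disj_un_singleton(2))
  also have "\<dots> = measure M {..<a}"
    using M_borel null by (intro measure_Un_null_set) simp_all
  finally have qa: "q x = measure M {..a}" by (simp add: q_def A)
  have m1: "(\<lambda>p. p - p * indicator {..<a} p) \<in> borel_measurable M"
    by (simp add: meas_M_borel2)
  have m2: "(\<lambda>p. p * indicator {a<..} p) \<in> borel_measurable M"
    by (simp add: meas_M_borel2)
  have e1: "(\<integral>p. p - p * indicator {..<a} p \<partial>M) = (\<integral>p. p * indicator {a<..} p \<partial>M)"
  proof (rule integral_cong_AE[OF m1 m2])
    show "AE p in M. p - p * indicator {..<a} p = p * indicator {a<..} p"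
      using ae_M_ne[of a] by eventually_elim (auto simp: indicator_def)
  qed
  have i1: "integrable M (\<lambda>p. p - p * indicator {..<a} p)"
    using M_mean M_borel by (intro Bochner_Integration.integrable_diff integrable_real_mult_indicator) auto
  have i2: "integrable M (\<lambda>p. c x * indicator {..<a} p)"
    using int_ind[of x] A by simp
  have "Kx x = (\<integral>p. (p - p * indicator {..<a} p) - c x * indicator {..<a} p \<partial>M)"
    unfolding Kx_def h_def A by (simp add: algebra_simps)
  also have "\<dots> = (\<integral>p. p - p * indicator {..<a} p \<partial>M) - (\<integral>p. c x * indicator {..<a} p \<partial>M)"
    by (rule Bochner_Integration.integral_diff[OF i1 i2])
  also have "(\<integral>p. c x * indicator {..<a} p \<partial>M) = c x * q x"
    by (simp add: q_def A space_M)
  finally have K: "Kx x = (\<integral>p. p * indicator {a<..} p \<partial>M) - measure M {..a} * c x"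
    using e1 qa by simp
  show ?thesis using Vbar_deriv[OF x] unfolding ps K qa .
qed

end

lemma c_strict_full:
  fixes C c :: "real \<Rightarrow> real"
  assumes sc: "strict_convex_on {0..} C"
    and C_deriv: "\<forall>x\<ge>0. (C has_real_derivative c x) (at x within {0..})"
    and c_cont: "continuous_on {0..} c"
    and ab: "0 \<le> a" "a < b"
  shows "c a < c b"
proof (cases "a = 0")
  case False thus ?thesis using c_strict[OF sc C_deriv] ab by simp
next
  case True
  have hb: "c (b/2) < c b" using c_strict[OF sc C_deriv, of "b/2" b] ab True by simp
  have lim: "(c \<longlongrightarrow> c 0) (at 0 within {0..})"
    using c_cont unfolding continuous_on_def by simp
  hence lim': "(c \<longlongrightarrow> c 0) (at_right 0)"
    by (rule tendsto_within_subset) auto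
  have ev: "eventually (\<lambda>t. c t \<le> c (b/2)) (at_right (0::real))"
    unfolding eventually_at_right[OF half_gt_zero[of b, OF ab(2)[unfolded True]]]
  proof (intro exI conjI allI impI)
    show "0 < b / 2" using ab True by simp
    fix t :: real assume "0 < t" "t < b / 2"
    thus "c t \<le> c (b/2)" using c_strict[OF sc C_deriv, of t "b/2"] by simp
  qed
  have "c 0 \<le> c (b/2)"
    by (rule tendsto_upperbound[OF lim' ev]) simp
  thus ?thesis using hb True by simp
qed

definition gS :: "real \<Rightarrow> nat \<Rightarrow> (nat \<Rightarrow> real) \<Rightarrow> real \<Rightarrow> real" where
  "gS \<beta> N ps p = \<beta> * ((1 / real N) * (\<Sum>i=1..N. max (ps i - p) 0)) - (1 - \<beta>) * p"

definition gM :: "real \<Rightarrow> nat \<Rightarrow> (nat \<Rightarrow> real) \<Rightarrow> real \<Rightarrow> real" where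
  "gM \<beta> N ps p = \<beta> * max (muN N ps - p) 0 - (1 - \<beta>) * p"

lemma gS_cont: "continuous_on UNIV (gS \<beta> N ps)"
  unfolding gS_def by (intro continuous_intros)

lemma gM_cont: "continuous_on UNIV (gM \<beta> N ps)"
  unfolding gM_def by (intro continuous_intros)

lemma gS_strict:
  assumes "0 < \<beta>" "\<beta> < 1" "a < b" shows "gS \<beta> N ps b < gS \<beta> N ps a"
proof -
  have "(\<Sum>i=1..N. max (ps i - b) 0) \<le> (\<Sum>i=1..N. max (ps i - a) 0)"
    using assms by (intro sum_mono) auto
  hence "\<beta> * ((1 / real N) * (\<Sum>i=1..N. max (ps i - b) 0)) \<le> \<beta> * ((1 / real N) * (\<Sum>i=1..N. max (ps i - a) 0))"
    using assms by (intro mult_left_mono) auto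
  moreover have "(1 - \<beta>) * a < (1 - \<beta>) * b" using assms by simp
  ultimately show ?thesis unfolding gS_def by linarith
qed

lemma gM_strict:
  assumes "0 < \<beta>" "\<beta> < 1" "a < b" shows "gM \<beta> N ps b < gM \<beta> N ps a"
proof -
  have "\<beta> * max (muN N ps - b) 0 \<le> \<beta> * max (muN N ps - a) 0"
    using assms by (intro mult_left_mono) auto
  moreover have "(1 - \<beta>) * a < (1 - \<beta>) * b" using assms by simp
  ultimately show ?thesis unfolding gM_def by linarith
qed

lemma gS_high: assumes "0 < \<beta>" "\<beta> < 1" shows "\<exists>p. z \<le> gS \<beta> N ps p"
proof
  let ?p = "- \<bar>z\<bar> / (1 - \<beta>)"
  have "0 \<le> \<beta> * ((1 / real N) * (\<Sum>i=1..N. max (ps i - ?p) 0))"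
    using assms by (intro mult_nonneg_nonneg sum_nonneg) auto
  moreover have "(1 - \<beta>) * ?p = - \<bar>z\<bar>" using assms by simp
  ultimately show "z \<le> gS \<beta> N ps ?p" unfolding gS_def by linarith
qed

lemma gS_low: assumes "0 < \<beta>" "\<beta> < 1" shows "\<exists>p. gS \<beta> N ps p \<le> z"
proof
  define p where "p = (\<Sum>i=1..N. \<bar>ps i\<bar>) + \<bar>z\<bar> / (1 - \<beta>)"
  have s0: "0 \<le> (\<Sum>i=1..N. \<bar>ps i\<bar>)" by (rule sum_nonneg) simp
  have z0: "0 \<le> \<bar>z\<bar> / (1 - \<beta>)" using assms by simp
  have "ps i \<le> p" if "i \<in> {1..N}" for i
  proof -
    have "ps i \<le> \<bar>ps i\<bar>" by simp
    also have "\<dots> \<le> (\<Sum>i=1..N. \<bar>ps i\<bar>)" using that by (intro member_le_sum) auto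
    finally show ?thesis using z0 by (simp add: p_def)
  qed
  hence "(\<Sum>i=1..N. max (ps i - p) 0) = 0" by (intro sum.neutral) auto
  hence "gS \<beta> N ps p = - ((1 - \<beta>) * p)" unfolding gS_def by simp
  also have "(1 - \<beta>) * p = (1 - \<beta>) * (\<Sum>i=1..N. \<bar>ps i\<bar>) + \<bar>z\<bar>"
  proof -
    have "(1 - \<beta>) * (\<bar>z\<bar> / (1 - \<beta>)) = \<bar>z\<bar>" using assms by simp
    thus ?thesis unfolding p_def distrib_left by simp
  qed
  finally have "gS \<beta> N ps p = - ((1 - \<beta>) * (\<Sum>i=1..N. \<bar>ps i\<bar>)) - \<bar>z\<bar>" by simp
  moreover have "0 \<le> (1 - \<beta>) * (\<Sum>i=1..N. \<bar>ps i\<bar>)" using assms s0 by simp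
  ultimately show "gS \<beta> N ps p \<le> z" by linarith
qed

lemma gM_high: assumes "0 < \<beta>" "\<beta> < 1" shows "\<exists>p. z \<le> gM \<beta> N ps p"
proof
  let ?p = "- \<bar>z\<bar> / (1 - \<beta>)"
  have "0 \<le> \<beta> * max (muN N ps - ?p) 0" using assms by simp
  moreover have "(1 - \<beta>) * ?p = - \<bar>z\<bar>" using assms by simp
  ultimately show "z \<le> gM \<beta> N ps ?p" unfolding gM_def by linarith
qed

lemma gM_low: assumes "0 < \<beta>" "\<beta> < 1" shows "\<exists>p. gM \<beta> N ps p \<le> z"
proof
  define p where "p = \<bar>muN N ps\<bar> + \<bar>z\<bar> / (1 - \<beta>)"
  have z0: "0 \<le> \<bar>z\<bar> / (1 - \<beta>)" using assms by simp
  have "muN N ps \<le> p" using z0 abs_ge_self[of "muN N ps"] unfolding p_def by linarith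
  hence "gM \<beta> N ps p = - ((1 - \<beta>) * p)" unfolding gM_def by simp
  also have "(1 - \<beta>) * p = (1 - \<beta>) * \<bar>muN N ps\<bar> + \<bar>z\<bar>"
  proof -
    have "(1 - \<beta>) * (\<bar>z\<bar> / (1 - \<beta>)) = \<bar>z\<bar>" using assms by simp
    thus ?thesis unfolding p_def distrib_left by simp
  qed
  finally have "gM \<beta> N ps p = - ((1 - \<beta>) * \<bar>muN N ps\<bar>) - \<bar>z\<bar>" by simp
  moreover have "0 \<le> (1 - \<beta>) * \<bar>muN N ps\<bar>" using assms by simp
  ultimately show "gM \<beta> N ps p \<le> z" by linarith
qed

theorem lemma4:
  fixes \<beta> x1 :: real and C c :: "real \<Rightarrow> real" and M :: "real measure"
    and N :: nat and ps :: "nat \<Rightarrow> real"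
  assumes beta: "0 < \<beta>" "\<beta> < 1"
    and x1: "0 \<le> x1"
    and C_nonneg: "\<forall>x\<ge>0. 0 \<le> C x"
    and C_incr: "mono_on {0..} C"
    and C_strict_convex: "strict_convex_on {0..} C"
    and C_deriv: "\<forall>x\<ge>0. (C has_real_derivative c x) (at x within {0..})"
    and c_cont: "continuous_on {0..} c"
    and c_lim: "filterlim c at_top at_top"
    and M_prob: "prob_space M"
    and M_borel: "sets M = sets borel"
    and M_nonneg: "AE p in M. 0 \<le> p"
    and M_mean: "integrable M (\<lambda>p. p)"
    and M_no_atoms: "\<forall>a. measure M {a} = 0"
    and N_pos: "0 < N"
    and samples_nonneg: "\<forall>i\<in>{1..N}. 0 \<le> ps i"
  shows "\<forall>x\<in>{0<..<x1}.
     (Vbar (yS c \<beta> N ps) M C \<beta> has_real_derivative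
        ((\<integral>p. p * indicator {pstar (yS c \<beta> N ps) x<..} p \<partial>M)
           - measure M {..pstar (yS c \<beta> N ps) x} * c x)
        / (1 - \<beta> * measure M {..pstar (yS c \<beta> N ps) x})) (at x)
   \<and> (Vbar (yM c \<beta> N ps) M C \<beta> has_real_derivative
        ((\<integral>p. p * indicator {pstar (yM c \<beta> N ps) x<..} p \<partial>M)
           - measure M {..pstar (yM c \<beta> N ps) x} * c x)
        / (1 - \<beta> * measure M {..pstar (yM c \<beta> N ps) x})) (at x)"
proof -
  have cs: "\<And>a b. 0 \<le> a \<Longrightarrow> a < b \<Longrightarrow> c a < c b"
    using c_strict_full[OF C_strict_convex C_deriv c_cont] by blast
  interpret S: mdl C c M \<beta> "gS \<beta> N ps"
    by (rule mdl.intro[OF beta C_incr C_deriv cs c_cont c_lim M_prob M_borel M_mean M_no_atoms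
        gS_cont gS_strict[OF beta] gS_low[OF beta] gS_high[OF beta]])
  interpret Mm: mdl C c M \<beta> "gM \<beta> N ps"
    by (rule mdl.intro[OF beta C_incr C_deriv cs c_cont c_lim M_prob M_borel M_mean M_no_atoms
        gM_cont gM_strict[OF beta] gM_low[OF beta] gM_high[OF beta]])
  have yS_eq: "yS c \<beta> N ps = S.y"
    by (intro ext) (simp add: yS_def S.y_def gS_def)
  have yM_eq: "yM c \<beta> N ps = Mm.y"
    by (intro ext) (simp add: yM_def Mm.y_def gM_def)
  show ?thesis
  proof
    fix x assume "x \<in> {0<..<x1}"
    hence x: "0 < x" by simp
    show "(Vbar (yS c \<beta> N ps) M C \<beta> has_real_derivative
        ((\<integral>p. p * indicator {pstar (yS c \<beta> N ps) x<..} p \<partial>M)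
           - measure M {..pstar (yS c \<beta> N ps) x} * c x)
        / (1 - \<beta> * measure M {..pstar (yS c \<beta> N ps) x})) (at x)
   \<and> (Vbar (yM c \<beta> N ps) M C \<beta> has_real_derivative
        ((\<integral>p. p * indicator {pstar (yM c \<beta> N ps) x<..} p \<partial>M)
           - measure M {..pstar (yM c \<beta> N ps) x} * c x)
        / (1 - \<beta> * measure M {..pstar (yM c \<beta> N ps) x})) (at x)"
      unfolding yS_eq yM_eq by (intro conjI S.final[OF x] Mm.final[OF x])
  qed
qed

end
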